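(* Let $U\subset\mathbb{C}^4$ be a domain and $\eta$ a holomorphic 2-form on $U$ with $\eta\not\equiv0$. Let $\nu=dz_1\wedge dz_2\wedge dz_3\wedge dz_4$ and let $X=\mathrm{rot}(\eta)$ be the holomorphic vector field defined by $d\eta=i_X\nu$. If $X\not\equiv 0$, then $\eta$ is integrable if and only if $i_X\eta=0$.
   Context: For a holomorphic $q$-form $\eta$ on an open set $U\subset\mathbb{C}^n$, $\mathrm{Sing}(\eta)=\{z\in U:\eta(z)=0\}$. The form $\eta$ is called integrable if every point $p\in U\setminus\mathrm{Sing}(\eta)$ has an open neighborhood $V$ on which there are holomorphic 1-forms $\omega_1,\dots,\omega_q$ with $\eta|_V=\omega_1\wedge\cdots\wedge\omega_q$ and $d\omega_j\wedge\eta=0$ on $V$ for $j=1,\dots,q$. *)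

theory Defs
  imports "HOL-Analysis.Analysis"
begin

text \<open>A form is given by its coefficient
  function: at a point z, the value at an index set I is the coefficient of
  dz_I = dz_{i1} wedge ... wedge dz_{iq}, where i1 < ... < iq enumerate I.\<close>

type_synonym 'n cform = "complex^'n \<Rightarrow> ('n set \<Rightarrow> complex)"
type_synonym 'n cvfield = "complex^'n \<Rightarrow> complex^'n"

definition holo_on :: "(complex^'n) set \<Rightarrow> (complex^'n \<Rightarrow> complex) \<Rightarrow> bool" where
  "holo_on U f \<longleftrightarrow> (\<forall>z\<in>U. \<exists>f'. (f has_derivative f') (at z) \<and>
                                  (\<forall>c v. f' (c *s v) = c * f' v))"

definition pderiv_c :: "'n::finite \<Rightarrow> (complex^'n \<Rightarrow> complex) \<Rightarrow> complex^'n \<Rightarrow> complex" where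
  "pderiv_c k f z = deriv (\<lambda>t. f (z + t *s axis k 1)) 0"

text \<open>Sign of the permutation sorting the concatenation of the increasing
  enumerations of I and J (I, J disjoint): dz_I wedge dz_J = sgn_pair I J * dz_(I union J).\<close>
definition sgn_pair :: "'n::linorder set \<Rightarrow> 'n set \<Rightarrow> complex" where
  "sgn_pair I J = (-1) ^ card {(i, j). i \<in> I \<and> j \<in> J \<and> j < i}"

definition holo_form :: "nat \<Rightarrow> (complex^'n::finite) set \<Rightarrow> 'n cform \<Rightarrow> bool" where
  "holo_form q U \<eta> \<longleftrightarrow> (\<forall>I. card I = q \<longrightarrow> holo_on U (\<lambda>z. \<eta> z I)) \<and>
                        (\<forall>I. card I \<noteq> q \<longrightarrow> (\<forall>z\<in>U. \<eta> z I = 0))"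

definition holo_field :: "(complex^'n::finite) set \<Rightarrow> 'n cvfield \<Rightarrow> bool" where
  "holo_field U X \<longleftrightarrow> (\<forall>k. holo_on U (\<lambda>z. X z $ k))"

definition wedge :: "'n::{finite,linorder} cform \<Rightarrow> 'n cform \<Rightarrow> 'n cform" where
  "wedge \<alpha> \<beta> = (\<lambda>z K. \<Sum>I\<in>Pow K. sgn_pair I (K - I) * \<alpha> z I * \<beta> z (K - I))"

definition wedge_list :: "'n::{finite,linorder} cform list \<Rightarrow> 'n cform" where
  "wedge_list ws = foldr wedge ws (\<lambda>z K. if K = {} then 1 else 0)"

definition ext_d :: "'n::{finite,linorder} cform \<Rightarrow> 'n cform" where
  "ext_d \<alpha> = (\<lambda>z K. \<Sum>k\<in>K. sgn_pair {k} (K - {k}) * pderiv_c k (\<lambda>w. \<alpha> w (K - {k})) z)"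

definition interior_prod :: "'n::{finite,linorder} cvfield \<Rightarrow> 'n cform \<Rightarrow> 'n cform" where
  "interior_prod X \<alpha> = (\<lambda>z J. \<Sum>k\<in>UNIV - J. sgn_pair {k} J * (X z $ k) * \<alpha> z (insert k J))"

definition vol_form :: "'n::{finite,linorder} cform" where
  "vol_form = (\<lambda>z K. if K = UNIV then 1 else 0)"

definition Sing :: "(complex^'n) set \<Rightarrow> 'n cform \<Rightarrow> (complex^'n) set" where
  "Sing U \<eta> = {z \<in> U. \<eta> z = (\<lambda>_. 0)}"

definition integrable_form :: "nat \<Rightarrow> (complex^'n::{finite,linorder}) set \<Rightarrow> 'n cform \<Rightarrow> bool" where
  "integrable_form q U \<eta> \<longleftrightarrow>
     (\<forall>p \<in> U - Sing U \<eta>. \<exists>V. open V \<and> p \<in> V \<and> V \<subseteq> U \<and>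
        (\<exists>ws. length ws = q \<and> (\<forall>\<omega>\<in>set ws. holo_form 1 V \<omega>) \<and>
              (\<forall>z\<in>V. \<eta> z = wedge_list ws z) \<and>
              (\<forall>\<omega>\<in>set ws. \<forall>z\<in>V. wedge (ext_d \<omega>) \<eta> z = (\<lambda>_. 0))))"

end

theory Submission
  imports Defs "HOL-Complex_Analysis.Complex_Analysis"
begin


lemma smult_axis: "(t::complex) *s axis k 1 = axis k t"
  by (simp add: vec_eq_iff axis_def)

lemma norm_axis_c: "norm (axis k (t::complex)) = norm t"
proof -
  have "(\<Sum>i\<in>UNIV. (norm (vec_nth (axis k t) i))\<^sup>2) = (\<Sum>i\<in>UNIV. if i = k then (norm t)\<^sup>2 else 0)"
    by (rule sum.cong) (auto simp: axis_def)
  then show ?thesis by (simp add: norm_vec_def L2_set_def)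
qed

lemma line_has_derivative:
  fixes u :: "complex^'n::finite"
  shows "((\<lambda>t. a + t *s u) has_derivative (\<lambda>h. h *s u)) (at t0)"
proof -
  have bl: "bounded_linear (\<lambda>h::complex. h *s u)"
  proof (rule linear_conv_bounded_linear[THEN iffD1])
    show "linear (\<lambda>h::complex. h *s u)"
      by (rule linearI) (simp_all add: vec_eq_iff algebra_simps)
  qed
  have "((\<lambda>t. a + t *s u) has_derivative (\<lambda>h. 0 + h *s u)) (at t0)"
    by (intro derivative_intros bounded_linear.has_derivative[OF bl])
  then show ?thesis by simp
qed

lemma holo_line:
  assumes "holo_on U f" "a + t0 *s u \<in> U"
  obtains D where "((\<lambda>t. f (a + t *s u)) has_field_derivative D) (at t0)"
proof -
  obtain f' where f': "(f has_derivative f') (at (a + t0 *s u))" and lin: "\<And>c v. f' (c *s v) = c * f' v"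
    using assms unfolding holo_on_def by blast
  have "((\<lambda>t. f (a + t *s u)) has_derivative (\<lambda>h. f' (h *s u))) (at t0)"
    using has_derivative_compose[OF line_has_derivative f'] by simp
  moreover have "(\<lambda>h. f' (h *s u)) = (*) (f' u)" by (auto simp: lin)
  ultimately show ?thesis using that unfolding has_field_derivative_def by auto
qed

lemma holo_line_holomorphic:
  assumes "holo_on U f"
  shows "(\<lambda>t. f (a + t *s u)) holomorphic_on {t. a + t *s u \<in> U}"
  unfolding holomorphic_on_def
proof
  fix t assume "t \<in> {t. a + t *s u \<in> U}"
  then obtain D where "((\<lambda>t. f (a + t *s u)) has_field_derivative D) (at t)"
    using holo_line[OF assms] by blast
  then show "(\<lambda>t. f (a + t *s u)) field_differentiable at t within {t. a + t *s u \<in> U}"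
    using field_differentiable_at_within field_differentiable_def by blast
qed

lemma holo_on_continuous: "holo_on U f \<Longrightarrow> continuous_on U f"
  unfolding holo_on_def
  by (meson continuous_at_imp_continuous_on has_derivative_continuous)

lemma holo_on_subset: "holo_on U f \<Longrightarrow> V \<subseteq> U \<Longrightarrow> holo_on V f"
  unfolding holo_on_def by blast

lemma holo_on_const: "holo_on U (\<lambda>z. c)"
  unfolding holo_on_def by (auto intro!: exI[of _ "\<lambda>_. 0"])

lemma holo_on_add: "holo_on U f \<Longrightarrow> holo_on U g \<Longrightarrow> holo_on U (\<lambda>z. f z + g z)"
  unfolding holo_on_def
proof (intro ballI)
  fix z assume "\<forall>z\<in>U. \<exists>f'. (f has_derivative f') (at z) \<and> (\<forall>c v. f' (c *s v) = c * f' v)"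
    "\<forall>z\<in>U. \<exists>f'. (g has_derivative f') (at z) \<and> (\<forall>c v. f' (c *s v) = c * f' v)" "z \<in> U"
  then obtain f' g' where "(f has_derivative f') (at z)" "\<forall>c v. f' (c *s v) = c * f' v"
    "(g has_derivative g') (at z)" "\<forall>c v. g' (c *s v) = c * g' v" by blast
  then show "\<exists>h'. ((\<lambda>z. f z + g z) has_derivative h') (at z) \<and> (\<forall>c v. h' (c *s v) = c * h' v)"
    by (intro exI[of _ "\<lambda>h. f' h + g' h"]) (auto intro: has_derivative_add simp: algebra_simps)
qed

lemma holo_on_mult: "holo_on U f \<Longrightarrow> holo_on U g \<Longrightarrow> holo_on U (\<lambda>z. f z * g z)"
  unfolding holo_on_def
proof (intro ballI)
  fix z assume "\<forall>z\<in>U. \<exists>f'. (f has_derivative f') (at z) \<and> (\<forall>c v. f' (c *s v) = c * f' v)"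
    "\<forall>z\<in>U. \<exists>f'. (g has_derivative f') (at z) \<and> (\<forall>c v. f' (c *s v) = c * f' v)" "z \<in> U"
  then obtain f' g' where "(f has_derivative f') (at z)" "\<forall>c v. f' (c *s v) = c * f' v"
    "(g has_derivative g') (at z)" "\<forall>c v. g' (c *s v) = c * g' v" by blast
  then show "\<exists>h'. ((\<lambda>z. f z * g z) has_derivative h') (at z) \<and> (\<forall>c v. h' (c *s v) = c * h' v)"
    by (intro exI[of _ "\<lambda>h. f z * g' h + f' h * g z"]) (auto intro: has_derivative_mult simp: algebra_simps)
qed

lemma holo_on_inverse: "holo_on U f \<Longrightarrow> (\<And>z. z \<in> U \<Longrightarrow> f z \<noteq> 0) \<Longrightarrow> holo_on U (\<lambda>z. inverse (f z))"
  unfolding holo_on_def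
proof (intro ballI)
  fix z assume "\<forall>z\<in>U. \<exists>f'. (f has_derivative f') (at z) \<and> (\<forall>c v. f' (c *s v) = c * f' v)"
    "\<And>z. z \<in> U \<Longrightarrow> f z \<noteq> 0" "z \<in> U"
  then obtain f' where d: "(f has_derivative f') (at z)" "\<forall>c v. f' (c *s v) = c * f' v" "f z \<noteq> 0" by blast
  have "((\<lambda>z. inverse (f z)) has_derivative (\<lambda>h. - (inverse (f z) * f' h * inverse (f z)))) (at z)"
    using has_derivative_compose[OF d(1) has_derivative_inverse'[OF d(3)]] by simp
  then show "\<exists>h'. ((\<lambda>z. inverse (f z)) has_derivative h') (at z) \<and> (\<forall>c v. h' (c *s v) = c * h' v)"
    using d(2) by (intro exI[of _ "\<lambda>h. - (inverse (f z) * f' h * inverse (f z))"]) (auto simp: algebra_simps)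
qed

lemma holo_on_cmult: "holo_on U f \<Longrightarrow> holo_on U (\<lambda>z. c * f z)"
  using holo_on_mult[OF holo_on_const] by blast

lemma holo_on_diff: "holo_on U f \<Longrightarrow> holo_on U g \<Longrightarrow> holo_on U (\<lambda>z. f z - g z)"
  using holo_on_add[of U f "\<lambda>z. (-1) * g z"] holo_on_cmult[of U g "-1"] by simp

lemma holo_on_divide: "holo_on U f \<Longrightarrow> holo_on U g \<Longrightarrow> (\<And>z. z \<in> U \<Longrightarrow> g z \<noteq> 0) \<Longrightarrow> holo_on U (\<lambda>z. f z / g z)"
  unfolding divide_inverse by (rule holo_on_mult) (auto intro: holo_on_inverse)

lemma holo_on_sum: "finite S \<Longrightarrow> (\<And>i. i \<in> S \<Longrightarrow> holo_on U (f i)) \<Longrightarrow> holo_on U (\<lambda>z. \<Sum>i\<in>S. f i z)"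
  by (induction S rule: finite_induct) (auto intro: holo_on_const holo_on_add)

lemma holo_on_cong:
  assumes "open U" "\<And>z. z \<in> U \<Longrightarrow> f z = g z" "holo_on U f"
  shows "holo_on U g"
  unfolding holo_on_def
proof
  fix z assume z: "z \<in> U"
  then obtain f' where "(f has_derivative f') (at z)" "\<forall>c v. f' (c *s v) = c * f' v"
    using assms(3) unfolding holo_on_def by blast
  moreover have "(g has_derivative f') (at z)"
    by (rule has_derivative_transform_within_open[OF \<open>(f has_derivative f') (at z)\<close> assms(1) z]) (use assms(2) in auto)
  ultimately show "\<exists>f'. (g has_derivative f') (at z) \<and> (\<forall>c v. f' (c *s v) = c * f' v)" by blast
qed


lemma norm_smult_vec: "norm ((t::complex) *s (u::complex^'n::finite)) = norm t * norm u"
proof -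
  have "norm (t *s u) = L2_set (\<lambda>i. norm t * norm (vec_nth u i)) UNIV"
    by (simp add: norm_vec_def norm_mult)
  also have "\<dots> = norm t * norm u"
    by (simp add: norm_vec_def L2_set_right_distrib)
  finally show ?thesis .
qed

lemma holo_pdiff:
  assumes "holo_on U f" "z \<in> U"
  shows "(\<lambda>t. f (z + t *s u)) field_differentiable (at 0)"
proof -
  have "z + 0 *s u \<in> U" using assms by simp
  then obtain D where "((\<lambda>t. f (z + t *s u)) has_field_derivative D) (at 0)"
    using holo_line[OF assms(1)] by blast
  then show ?thesis using field_differentiable_def by blast
qed

lemma pderiv_cong:
  assumes "open V" "z \<in> V" "\<And>w. w \<in> V \<Longrightarrow> f w = g w"
  shows "pderiv_c k f z = pderiv_c k g z"
  unfolding pderiv_c_def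
proof (rule deriv_cong_ev)
  obtain e where e: "e > 0" "ball z e \<subseteq> V" using assms open_contains_ball by blast
  show "\<forall>\<^sub>F x in nhds 0. f (z + x *s axis k 1) = g (z + x *s axis k 1)"
    unfolding eventually_nhds_metric
  proof (intro exI[of _ e] conjI allI impI)
    fix t :: complex assume "dist t 0 < e"
    then have "z + t *s axis k 1 \<in> ball z e"
      by (simp add: smult_axis dist_norm norm_axis_c)
    then show "f (z + t *s axis k 1) = g (z + t *s axis k 1)" using e assms(3) by blast
  qed (use e in auto)
qed simp

lemma holo_form_holo:
  assumes "holo_form q V \<alpha>" "open V"
  shows "holo_on V (\<lambda>w. \<alpha> w I)"
proof (cases "card I = q")
  case True then show ?thesis using assms unfolding holo_form_def by blast
next
  case False
  show ?thesis
    by (rule holo_on_cong[OF assms(2) _ holo_on_const[of V 0]]) (use False assms in \<open>auto simp: holo_form_def\<close>)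
qed

lemma holo_form_pderiv0:
  assumes "holo_form q V \<alpha>" "open V" "z \<in> V" "card I \<noteq> q"
  shows "pderiv_c k (\<lambda>w. \<alpha> w I) z = 0"
proof -
  have "pderiv_c k (\<lambda>w. \<alpha> w I) z = pderiv_c k (\<lambda>w. 0) z"
    by (rule pderiv_cong[OF assms(2,3)]) (use assms in \<open>auto simp: holo_form_def\<close>)
  also have "\<dots> = 0" by (simp add: pderiv_c_def)
  finally show ?thesis .
qed

definition pw :: "('n::{finite,linorder} set \<Rightarrow> complex) \<Rightarrow> ('n set \<Rightarrow> complex) \<Rightarrow> 'n set \<Rightarrow> complex" where
  "pw F G K = (\<Sum>I\<in>Pow K. sgn_pair I (K - I) * F I * G (K - I))"

lemma wedge_pw: "wedge \<alpha> \<beta> z = pw (\<alpha> z) (\<beta> z)"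
  by (simp add: wedge_def pw_def fun_eq_iff)

lemma pderiv_pw:
  assumes "\<And>I. (\<lambda>t. \<alpha> (z + t *s axis k 1) I) field_differentiable (at 0)"
    and "\<And>I. (\<lambda>t. \<beta> (z + t *s axis k 1) I) field_differentiable (at 0)"
  shows "pderiv_c k (\<lambda>w. pw (\<alpha> w) (\<beta> w) J) z =
     pw (\<lambda>I. pderiv_c k (\<lambda>w. \<alpha> w I) z) (\<beta> z) J + pw (\<alpha> z) (\<lambda>I. pderiv_c k (\<lambda>w. \<beta> w I) z) J"
proof -
  have d: "\<And>I. (\<lambda>t. sgn_pair I (J - I) * \<alpha> (z + t *s axis k 1) I * \<beta> (z + t *s axis k 1) (J - I)) field_differentiable (at 0)"
    using assms by (intro field_differentiable_mult field_differentiable_const) auto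
  have "pderiv_c k (\<lambda>w. pw (\<alpha> w) (\<beta> w) J) z =
      (\<Sum>I\<in>Pow J. deriv (\<lambda>t. sgn_pair I (J - I) * \<alpha> (z + t *s axis k 1) I * \<beta> (z + t *s axis k 1) (J - I)) 0)"
    unfolding pderiv_c_def pw_def by (rule deriv_sum) (rule d)
  also have "\<dots> = (\<Sum>I\<in>Pow J. sgn_pair I (J - I) * (pderiv_c k (\<lambda>w. \<alpha> w I) z * \<beta> z (J - I)
        + \<alpha> z I * pderiv_c k (\<lambda>w. \<beta> w (J - I)) z))"
  proof (rule sum.cong[OF refl])
    fix I
    have "deriv (\<lambda>t. sgn_pair I (J - I) * \<alpha> (z + t *s axis k 1) I * \<beta> (z + t *s axis k 1) (J - I)) 0
      = deriv (\<lambda>t. sgn_pair I (J - I) * (\<alpha> (z + t *s axis k 1) I * \<beta> (z + t *s axis k 1) (J - I))) 0"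
      by (simp add: mult.assoc)
    also have "\<dots> = sgn_pair I (J - I) * deriv (\<lambda>t. \<alpha> (z + t *s axis k 1) I * \<beta> (z + t *s axis k 1) (J - I)) 0"
      using assms by (intro deriv_cmult field_differentiable_mult) auto
    also have "\<dots> = sgn_pair I (J - I) * (\<alpha> z I * deriv (\<lambda>t. \<beta> (z + t *s axis k 1) (J - I)) 0
          + deriv (\<lambda>t. \<alpha> (z + t *s axis k 1) I) 0 * \<beta> z (J - I))"
      using deriv_mult[OF assms(1) assms(2)] by simp
    finally show "deriv (\<lambda>t. sgn_pair I (J - I) * \<alpha> (z + t *s axis k 1) I * \<beta> (z + t *s axis k 1) (J - I)) 0
      = sgn_pair I (J - I) * (pderiv_c k (\<lambda>w. \<alpha> w I) z * \<beta> z (J - I) + \<alpha> z I * pderiv_c k (\<lambda>w. \<beta> w (J - I)) z)"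
      by (simp add: pderiv_c_def algebra_simps)
  qed
  also have "\<dots> = pw (\<lambda>I. pderiv_c k (\<lambda>w. \<alpha> w I) z) (\<beta> z) J + pw (\<alpha> z) (\<lambda>I. pderiv_c k (\<lambda>w. \<beta> w I) z) J"
    unfolding pw_def by (simp add: sum.distrib[symmetric] algebra_simps)
  finally show ?thesis .
qed


lemma line_dist:
  fixes a q :: "complex^'n::finite"
  shows "dist (a + t *s u) q \<le> dist a q + norm t * norm u"
proof -
  have "dist (a + t *s u) q = norm ((a - q) + t *s u)" by (simp add: dist_norm algebra_simps)
  also have "\<dots> \<le> norm (a - q) + norm (t *s u)" by (rule norm_triangle_ineq)
  finally show ?thesis by (simp add: dist_norm norm_smult_vec)
qed

lemma pderiv_continuous:
  assumes hol: "holo_on U f" and U: "open U"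
  shows "continuous_on U (pderiv_c k f)"
  unfolding continuous_on_eq_continuous_at[OF U]
proof
  fix z0 assume z0: "z0 \<in> U"
  obtain R where R: "R > 0" "ball z0 R \<subseteq> U" using U z0 open_contains_ball by blast
  define r where "r = R / 3"
  have r: "r > 0" using R by (simp add: r_def)
  define KK where "KK = cball z0 (2 * r)"
  have KKU: "KK \<subseteq> U" using R r unfolding KK_def r_def by (auto simp: subset_eq)
  have "uniformly_continuous_on KK f"
    by (rule compact_uniformly_continuous) (use holo_on_continuous[OF hol] KKU continuous_on_subset KK_def in auto)
  then have uc: "\<forall>e>0. \<exists>d>0. \<forall>x\<in>KK. \<forall>x'\<in>KK. dist x' x < d \<longrightarrow> dist (f x') (f x) < e"
    unfolding uniformly_continuous_on_def .
  define e1 where "e1 = axis k (1::complex)"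
  have ne1: "norm e1 = 1" by (simp add: e1_def norm_axis_c)
  define g where "g z = (\<lambda>t. f (z + t *s e1))" for z
  have cauchy: "((\<lambda>u. g z u / (u - 0) ^ Suc 1) has_contour_integral (2 * pi * \<i> * pderiv_c k f z)) (circlepath 0 r)"
    if z: "z \<in> ball z0 r" for z
  proof -
    have sub: "cball 0 r \<subseteq> {t. z + t *s e1 \<in> U}"
    proof
      fix t :: complex assume "t \<in> cball 0 r"
      then have "norm t \<le> r" by simp
      moreover have "dist (z + t *s e1) z0 \<le> dist z z0 + norm t"
        using line_dist[of z t e1 z0] ne1 by simp
      moreover have "dist z z0 < r" using z by (simp add: dist_commute)
      ultimately have "dist (z + t *s e1) z0 < 2 * r + r" using r by linarith
      then have "z + t *s e1 \<in> ball z0 R" using r_def by (simp add: dist_commute)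
      then show "t \<in> {t. z + t *s e1 \<in> U}" using R(2) by auto
    qed
    have holg: "g z holomorphic_on {t. z + t *s e1 \<in> U}"
      unfolding g_def by (rule holo_line_holomorphic[OF hol])
    have "((\<lambda>u. g z u / (u - 0) ^ Suc 1) has_contour_integral ((2 * pi * \<i>) / fact 1 * (deriv ^^ 1) (g z) 0)) (circlepath 0 r)"
    proof (rule Cauchy_has_contour_integral_higher_derivative_circlepath)
      show "continuous_on (cball 0 r) (g z)"
        using holomorphic_on_imp_continuous_on[OF holg] continuous_on_subset sub by blast
      show "g z holomorphic_on ball 0 r" using holomorphic_on_subset[OF holg] sub ball_subset_cball by blast
    qed (use r in auto)
    then show ?thesis by (simp add: pderiv_c_def g_def e1_def)
  qed
  show "isCont (pderiv_c k f) z0"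
    unfolding continuous_at_eps_delta
  proof (intro allI impI)
    fix e :: real assume e: "e > 0"
    obtain d where d: "d > 0" "\<forall>x\<in>KK. \<forall>x'\<in>KK. dist x' x < d \<longrightarrow> dist (f x') (f x) < e * r / 2"
      using uc r e by (metis divide_pos_pos mult_pos_pos zero_less_numeral)
    show "\<exists>\<delta>>0. \<forall>x'. dist x' z0 < \<delta> \<longrightarrow> dist (pderiv_c k f x') (pderiv_c k f z0) < e"
    proof (intro exI[of _ "min r d"] conjI allI impI)
      fix z assume dz: "dist z z0 < min r d"
      have zb: "z \<in> ball z0 r" using dz by (simp add: dist_commute)
      have z0b: "z0 \<in> ball z0 r" using r by simp
      have int: "((\<lambda>u. g z u / (u - 0) ^ Suc 1 - g z0 u / (u - 0) ^ Suc 1) has_contour_integral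
          (2 * pi * \<i> * pderiv_c k f z - 2 * pi * \<i> * pderiv_c k f z0)) (circlepath 0 r)"
        by (rule has_contour_integral_diff[OF cauchy[OF zb] cauchy[OF z0b]])
      have bound: "norm (g z u / (u - 0) ^ Suc 1 - g z0 u / (u - 0) ^ Suc 1) \<le> e / (2 * r)"
        if u: "norm (u - 0) = r" for u
      proof -
        have inK: "z + u *s e1 \<in> KK" "z0 + u *s e1 \<in> KK"
          using line_dist[of z u e1 z0] line_dist[of z0 u e1 z0] u ne1 dz norm_ge_zero[of u] unfolding KK_def
          by (auto simp: dist_commute)
        have "dist (z + u *s e1) (z0 + u *s e1) = dist z z0" by (simp add: dist_norm)
        then have "dist (f (z + u *s e1)) (f (z0 + u *s e1)) < e * r / 2"
          using d(2) inK dz by auto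
        then have lt: "norm (g z u - g z0 u) < e * r / 2" by (simp add: g_def dist_norm)
        have "norm (g z u / (u - 0) ^ Suc 1 - g z0 u / (u - 0) ^ Suc 1) = norm (g z u - g z0 u) / r ^ 2"
          using u by (simp add: diff_divide_distrib[symmetric] norm_divide norm_power norm_mult power2_eq_square)
        also have "\<dots> \<le> (e * r / 2) / r ^ 2"
          using lt r by (intro divide_right_mono) auto
        also have "\<dots> = e / (2 * r)" using r by (simp add: power2_eq_square field_simps)
        finally show ?thesis .
      qed
      have "norm (2 * pi * \<i> * pderiv_c k f z - 2 * pi * \<i> * pderiv_c k f z0) \<le> e / (2 * r) * (2 * pi * r)"
        by (rule has_contour_integral_bound_circlepath[OF int]) (use e r bound in auto)
      then have "2 * pi * norm (pderiv_c k f z - pderiv_c k f z0) \<le> e / (2 * r) * (2 * pi * r)"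
        by (simp add: right_diff_distrib[symmetric] norm_mult)
      then have "norm (pderiv_c k f z - pderiv_c k f z0) \<le> e / 2"
        using r pi_gt_zero by (simp add: field_simps)
      then show "dist (pderiv_c k f z) (pderiv_c k f z0) < e" using e by (simp add: dist_norm)
    qed (use r d in auto)
  qed
qed

lemma holo_identity:
  assumes hol: "holo_on U g" and U: "open U" "connected U"
    and W: "open W" "W \<subseteq> U" "w0 \<in> W" and W0: "\<And>w. w \<in> W \<Longrightarrow> g w = 0"
    and z: "z \<in> U"
  shows "g z = 0"
proof -
  define Z where "Z = {x\<in>U. \<exists>e>0. \<forall>w\<in>ball x e. g w = 0}"
  have openZ: "open Z"
    unfolding open_contains_ball
  proof
    fix x assume "x \<in> Z"
    then obtain e where e: "e > 0" "\<forall>w\<in>ball x e. g w = 0" "x \<in> U" by (auto simp: Z_def)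
    obtain e' where e': "e' > 0" "ball x e' \<subseteq> U" using U(1) e(3) open_contains_ball by blast
    show "\<exists>e>0. ball x e \<subseteq> Z"
    proof (intro exI[of _ "min e e'"] conjI subsetI)
      fix y assume y: "y \<in> ball x (min e e')"
      have "\<forall>w\<in>ball y (e - dist x y). g w = 0"
      proof
        fix w assume "w \<in> ball y (e - dist x y)"
        then have "dist x w < e" using dist_triangle[of x w y] by simp
        then show "g w = 0" using e(2) by simp
      qed
      moreover have "e - dist x y > 0" using y by auto
      moreover have "y \<in> U" using y e' by auto
      ultimately show "y \<in> Z" unfolding Z_def by blast
    qed (use e e' in auto)
  qed
  have closedZ: "closedin (top_of_set U) Z"
    unfolding closedin_limpt
  proof (intro conjI allI impI)
    show "Z \<subseteq> U" by (auto simp: Z_def)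
    fix q assume q: "q islimpt Z \<and> q \<in> U"
    obtain R where R: "R > 0" "ball q R \<subseteq> U" using U(1) q open_contains_ball by blast
    have "\<forall>\<epsilon>>0. \<exists>x'\<in>Z. x' \<noteq> q \<and> dist x' q < \<epsilon>" using q by (simp add: islimpt_approachable)
    then obtain a where a: "a \<in> Z" "dist a q < R / 2" using R(1) by (meson half_gt_zero)
    obtain ea where ea: "ea > 0" "\<forall>w\<in>ball a ea. g w = 0" using a(1) by (auto simp: Z_def)
    have all0: "g y = 0" if y: "y \<in> ball a (R / 2)" for y
    proof (cases "y = a")
      case True then show ?thesis using ea by auto
    next
      case False
      define u where "u = y - a"
      have nu: "norm u > 0" "norm u < R / 2" using False y by (auto simp: u_def dist_norm norm_minus_commute)
      define \<rho> where "\<rho> = (R - dist a q) / norm u"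
      have rho1: "\<rho> > 1" using nu a(2) by (simp add: \<rho>_def field_simps)
      have sub: "ball 0 \<rho> \<subseteq> {t. a + t *s u \<in> U}"
      proof
        fix t :: complex assume "t \<in> ball 0 \<rho>"
        then have "norm t * norm u < R - dist a q" using nu by (simp add: \<rho>_def field_simps)
        then have "dist (a + t *s u) q < R" using line_dist[of a t u q] by linarith
        then show "t \<in> {t. a + t *s u \<in> U}" using R(2) by (auto simp: dist_commute)
      qed
      have holh: "(\<lambda>t. g (a + t *s u)) holomorphic_on ball 0 \<rho>"
        using holomorphic_on_subset[OF holo_line_holomorphic[OF hol] sub] .
      have ne: "ball 0 (min \<rho> (ea / norm u)) \<noteq> {}"
      proof -
        have "ea / norm u > 0" using ea nu by simp
        then show ?thesis using rho1 by auto
      qed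
      have h0: "g (a + t *s u) = 0" if t: "t \<in> ball 0 (min \<rho> (ea / norm u))" for t
      proof -
        from t have "norm t * norm u < ea" using nu by (simp add: field_simps)
        then have "a + t *s u \<in> ball a ea" by (simp add: dist_norm norm_smult_vec)
        then show "g (a + t *s u) = 0" using ea by auto
      qed
      have "(\<lambda>t. g (a + t *s u)) 1 = (\<lambda>t. 0) 1"
        by (rule analytic_continuation_open[of "ball 0 (min \<rho> (ea / norm u))" "ball 0 \<rho>"])
           (use holh rho1 ne h0 in auto)
      then show ?thesis by (simp add: u_def)
    qed
    have "dist a q < R / 2" by (rule a(2))
    then have "\<forall>w\<in>ball q (R / 2 - dist a q). g w = 0"
    proof (intro ballI)
      fix w assume "w \<in> ball q (R / 2 - dist a q)"
      then have "dist a w < R / 2" using dist_triangle[of a w q] by simp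
      then show "g w = 0" using all0 by simp
    qed
    moreover have "R / 2 - dist a q > 0" using a(2) by simp
    ultimately have "\<exists>e>0. \<forall>w\<in>ball q e. g w = 0" by blast
    then show "q \<in> Z" using q unfolding Z_def by blast
  qed
  have "Z \<noteq> {}"
  proof -
    obtain e where "e > 0" "ball w0 e \<subseteq> W" using W open_contains_ball by blast
    then have "w0 \<in> Z" using W W0 unfolding Z_def by auto
    then show ?thesis by auto
  qed
  moreover have "openin (top_of_set U) Z" using openZ by (intro open_subset) (auto simp: Z_def)
  ultimately have "Z = U" using U(2) closedZ unfolding connected_clopen by blast
  then obtain e where "e > 0" "\<forall>w\<in>ball z e. g w = 0" using z unfolding Z_def by auto
  then show ?thesis by auto
qed


lemma ord4[simp]: "(0::4) < 1" "(1::4) < 2" "(2::4) < 3" "(0::4) < 2" "(0::4) < 3" "(1::4) < 3"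
  by (simp_all add: less_bit0_def bit0.Rep_numeral bit0.Rep_0 bit0.Rep_1)
lemma ord4n[simp]: "\<not> (1::4) < 0" "\<not> (2::4) < 0" "\<not> (3::4) < 0" "\<not> (2::4) < 1" "\<not> (3::4) < 1" "\<not> (3::4) < 2"
  using ord4 by (meson less_asym)+
lemma four_eq: "(4::4) = 0" by (simp add: bit0.Rep_inject_sym bit0.Rep_numeral bit0.Rep_0)
lemma univ4: "(UNIV::4 set) = {0,1,2,3}"
  using exhaust_4 four_eq by auto

lemma sum_Pow_insert:
  fixes A :: "'a::finite set"
  assumes "a \<notin> A"
  shows "sum f (Pow (insert a A)) = sum f (Pow A) + sum (\<lambda>I. f (insert a I)) (Pow A)"
proof -
  have "Pow (insert a A) = Pow A \<union> insert a ` Pow A" by (rule Pow_insert)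
  moreover have "Pow A \<inter> insert a ` Pow A = {}" using assms by auto
  moreover have "inj_on (insert a) (Pow A)" using assms by (auto simp: inj_on_def)
  ultimately show ?thesis by (simp add: sum.union_disjoint sum.reindex)
qed

lemma sgn_pair_prod:
  fixes I J :: "'a::{finite,linorder} set"
  shows "sgn_pair I J = (\<Prod>i\<in>I. \<Prod>j\<in>J. if j < i then -1 else 1)"
proof -
  have "(\<Prod>i\<in>I. \<Prod>j\<in>J. if j < i then -1 else (1::complex)) = (\<Prod>p\<in>I\<times>J. if snd p < fst p then -1 else 1)"
    by (simp add: prod.cartesian_product case_prod_beta)
  also have "\<dots> = (\<Prod>p\<in>I\<times>J. (-1::complex) ^ (if snd p < fst p then 1 else 0))"
    by (rule prod.cong) auto
  also have "\<dots> = (-1) ^ (\<Sum>p\<in>I\<times>J. if snd p < fst p then 1 else 0)"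
    by (simp add: power_sum)
  also have "(\<Sum>p\<in>I\<times>J. if snd p < fst p then 1 else 0) = card {p\<in>I\<times>J. snd p < fst p}"
    by (simp add: sum.If_cases Int_def conj_commute)
  also have "{p\<in>I\<times>J. snd p < fst p} = {(i, j). i \<in> I \<and> j \<in> J \<and> j < i}" by auto
  finally show ?thesis by (simp add: sgn_pair_def)
qed

lemma K4_split: "(K::4 set) = (if 0 \<in> K then {0} else {}) \<union> (if 1 \<in> K then {1} else {}) \<union> (if 2 \<in> K then {2} else {}) \<union> (if 3 \<in> K then {3} else {})"
proof (rule set_eqI)
  fix x :: 4
  have "x = 0 \<or> x = 1 \<or> x = 2 \<or> x = 3" using exhaust_4[of x] four_eq by auto
  then show "x \<in> K \<longleftrightarrow> x \<in> (if 0 \<in> K then {0} else {}) \<union> (if 1 \<in> K then {1} else {}) \<union> (if 2 \<in> K then {2} else {}) \<union> (if 3 \<in> K then {3} else {})"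
    by (elim disjE) auto
qed

lemma K4_cases:
  assumes "P {}" "P {0}" "P {1}" "P {2}" "P {3}" "P {0,1}" "P {0,2}" "P {0,3}" "P {1,2}" "P {1,3}" "P {2,3}"
    "P {0,1,2}" "P {0,1,3}" "P {0,2,3}" "P {1,2,3}" "P {0,1,2,3}"
  shows "P (K::4 set)"
  apply (subst K4_split)
  apply (cases "0 \<in> K"; cases "1 \<in> K"; cases "2 \<in> K"; cases "3 \<in> K")
  using assms by (simp_all add: insert_commute)

definition dpt :: "('n::{finite,linorder} \<Rightarrow> 'n set \<Rightarrow> complex) \<Rightarrow> 'n set \<Rightarrow> complex" where
  "dpt D K = (\<Sum>k\<in>K. sgn_pair {k} (K - {k}) * D k (K - {k}))"
definition ip :: "complex^'n::{finite,linorder} \<Rightarrow> ('n set \<Rightarrow> complex) \<Rightarrow> 'n set \<Rightarrow> complex" where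
  "ip x F J = (\<Sum>k\<in>UNIV - J. sgn_pair {k} J * vec_nth x k * F (insert k J))"
definition dg :: "nat \<Rightarrow> ('n set \<Rightarrow> complex) \<Rightarrow> bool" where
  "dg q F \<longleftrightarrow> (\<forall>I. card I \<noteq> q \<longrightarrow> F I = 0)"
definition volp :: "'n::finite set \<Rightarrow> complex" where
  "volp K = (if K = UNIV then 1 else 0)"

lemma dgD: "dg q F \<Longrightarrow> card I \<noteq> q \<Longrightarrow> F I = 0" by (simp add: dg_def)

lemmas csimps = sum_Pow_insert insert_Diff_if sgn_pair_prod insert_commute pw_def dpt_def ip_def volp_def


lemma ip4: "ip x (F::4 set \<Rightarrow> complex) J = (\<Sum>k\<in>{0,1,2,3} - J. sgn_pair {k} J * vec_nth x k * F (insert k J))"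
  unfolding ip_def by (subst univ4) (rule refl)
lemma card4: "card (UNIV::4 set) = 4" by simp
lemma volp4: "volp (K::4 set) = (if card K = 4 then 1 else 0)"
  unfolding volp_def using card_subset_eq[of "UNIV::4 set" K] by auto

lemmas cs = sum_Pow_insert insert_Diff_if sgn_pair_prod insert_commute pw_def dpt_def ip4 volp4

lemma B5: assumes "dg 2 (E::4 set \<Rightarrow> complex)" shows "ip x (ip v E) {} = - ip v (ip x E) {}"
  by (simp add: dgD[OF assms] cs algebra_simps)

lemma B6: assumes "dg 1 (a::4 set \<Rightarrow> complex)" "dg 1 b"
  shows "ip x (pw a b) J = ip x a {} * b J - ip x b {} * a J"
  apply (rule K4_cases[of "\<lambda>J. ip x (pw a b) J = ip x a {} * b J - ip x b {} * a J"])
  by (simp_all add: dgD[OF assms(1)] dgD[OF assms(2)] cs algebra_simps)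

lemma B4: assumes "dg 1 (a::4 set \<Rightarrow> complex)"
  shows "pw (ip x volp) a {0,1,2,3} = - ip x a {}"
  by (simp add: dgD[OF assms(1)] cs algebra_simps)

lemma B3a: assumes "dg 2 (G::4 set \<Rightarrow> complex)" "dg 2 D" "dg 1 a" "dg 1 b"
  shows "pw (\<lambda>K. pw G b K - pw a D K) a {0,1,2,3} = - pw G (pw a b) {0,1,2,3}"
  by (simp add: dgD[OF assms(1)] dgD[OF assms(2)] dgD[OF assms(3)] dgD[OF assms(4)] cs algebra_simps)

lemma B3b: assumes "dg 2 (G::4 set \<Rightarrow> complex)" "dg 2 D" "dg 1 a" "dg 1 b"
  shows "pw (\<lambda>K. pw G b K - pw a D K) b {0,1,2,3} = - pw D (pw a b) {0,1,2,3}"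
  by (simp add: dgD[OF assms(1)] dgD[OF assms(2)] dgD[OF assms(3)] dgD[OF assms(4)] cs algebra_simps)


lemma B7: assumes "dg 2 (E::4 set \<Rightarrow> complex)"
  shows "ip x (pw E E) J = 2 * pw (ip x E) E J"
  apply (rule K4_cases[of "\<lambda>J. ip x (pw E E) J = 2 * pw (ip x E) E J"])
  by (simp_all add: dgD[OF assms(1)] cs algebra_simps)

lemma Bdec: assumes "dg 2 (E::4 set \<Rightarrow> complex)" "pw E E {0,1,2,3} = 0"
  shows "ip w (ip v E) {} * E K = pw (ip v E) (ip w E) K"
  apply (rule K4_cases[of "\<lambda>K. ip w (ip v E) {} * E K = pw (ip v E) (ip w E) K"])
  using assms(2) by (simp_all add: dgD[OF assms(1)] cs; algebra)+

lemma Bleib: assumes "dg 1 (A::4 set \<Rightarrow> complex)" "dg 1 B" "\<And>k. dg 1 (DA k)" "\<And>k. dg 1 (DB k)"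
  shows "dpt (\<lambda>k J. pw (DA k) B J + pw A (DB k) J) K = pw (dpt DA) B K - pw A (dpt DB) K"
  apply (rule K4_cases[of "\<lambda>K. dpt (\<lambda>k J. pw (DA k) B J + pw A (DB k) J) K = pw (dpt DA) B K - pw A (dpt DB) K"])
  by (simp_all add: dgD[OF assms(1)] dgD[OF assms(2)] dgD[OF assms(3)] dgD[OF assms(4)] cs algebra_simps)


lemma ext_d_dpt: "ext_d \<alpha> z = dpt (\<lambda>k I. pderiv_c k (\<lambda>w. \<alpha> w I) z)"
  by (simp add: ext_d_def dpt_def fun_eq_iff)
lemma interior_ip: "interior_prod X \<alpha> z = ip (X z) (\<alpha> z)"
  by (simp add: interior_prod_def ip_def fun_eq_iff)
lemma vol_volp: "vol_form z = volp"
  by (simp add: vol_form_def volp_def fun_eq_iff)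

lemma wedge_unit: "wedge b (\<lambda>z K. if K = {} then 1 else 0) = b"
proof (intro ext)
  fix z K
  have "wedge b (\<lambda>z K. if K = {} then 1 else 0) z K = (\<Sum>I\<in>Pow K. if I = K then sgn_pair I (K - I) * b z I else 0)"
    unfolding wedge_def by (rule sum.cong) auto
  also have "\<dots> = sgn_pair K {} * b z K" by (simp add: sum.delta)
  also have "sgn_pair K {} = 1" by (simp add: sgn_pair_def)
  finally show "wedge b (\<lambda>z K. if K = {} then 1 else 0) z K = b z K" by simp
qed

lemma wedge_list2: "wedge_list [a, b] = wedge a b"
  by (simp add: wedge_list_def wedge_unit)

lemma hf_dg: "holo_form q U \<eta> \<Longrightarrow> z \<in> U \<Longrightarrow> dg q (\<eta> z)"
  by (auto simp: holo_form_def dg_def)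

lemma dg_pw:
  fixes F G :: "'n::{finite,linorder} set \<Rightarrow> complex"
  assumes "dg p F" "dg q G" shows "dg (p + q) (pw F G)"
  unfolding dg_def
proof (intro allI impI)
  fix K :: "'n set" assume K: "card K \<noteq> p + q"
  have "sgn_pair I (K - I) * F I * G (K - I) = 0" if I: "I \<in> Pow K" for I
  proof (cases "card I = p \<and> card (K - I) = q")
    case True
    have "card K = card I + card (K - I)" using I
      by (metis Pow_iff card_Diff_subset card_mono finite le_add_diff_inverse finite_subset)
    then show ?thesis using True K by simp
  next
    case False then show ?thesis using assms by (auto simp: dg_def)
  qed
  then show "pw F G K = 0" unfolding pw_def by (simp add: sum.neutral)
qed

lemma dg_ip:
  fixes F :: "'n::{finite,linorder} set \<Rightarrow> complex"
  assumes "dg (Suc q) F" shows "dg q (ip x F)"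
  unfolding dg_def
proof (intro allI impI)
  fix J :: "'n set" assume J: "card J \<noteq> q"
  have "F (insert k J) = 0" if "k \<in> UNIV - J" for k
    using assms that J by (auto simp: dg_def)
  then show "ip x F J = 0" unfolding ip_def by (simp add: sum.neutral)
qed

lemma dg_div: "dg q F \<Longrightarrow> dg q (\<lambda>I. F I / c)" by (simp add: dg_def)

lemma dg_dpt:
  fixes D :: "'n::{finite,linorder} \<Rightarrow> 'n set \<Rightarrow> complex"
  assumes "\<And>k. dg q (D k)" shows "dg (Suc q) (dpt D)"
  unfolding dg_def
proof (intro allI impI)
  fix K :: "'n set" assume K: "card K \<noteq> Suc q"
  have "D k (K - {k}) = 0" if "k \<in> K" for k
  proof -
    have "card (K - {k}) = card K - 1" using that by simp
    moreover have "card K \<ge> 1" using that card_0_eq[of K] by (cases "card K") auto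
    ultimately have "card (K - {k}) \<noteq> q" using K by auto
    then show ?thesis using assms by (auto simp: dg_def)
  qed
  then show "dpt D K = 0" unfolding dpt_def by (simp add: sum.neutral)
qed

lemma hf_pderiv_dg: "holo_form q V \<omega> \<Longrightarrow> open V \<Longrightarrow> z \<in> V \<Longrightarrow> dg q (\<lambda>I. pderiv_c k (\<lambda>w. \<omega> w I) z)"
  using holo_form_pderiv0 by (auto simp: dg_def)

lemma ip_div: "ip x (\<lambda>I. F I / c) J = ip x F J / c" by (simp add: ip_def sum_divide_distrib)
lemma pw_div: "pw (\<lambda>I. F I / c) G K = pw F G K / c" by (simp add: pw_def sum_divide_distrib)
lemma ip_zero: "ip x (\<lambda>_. 0) J = 0" by (simp add: ip_def)
lemma pw_zero: "pw (\<lambda>_. 0) G K = 0" by (simp add: pw_def)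

lemma ip_axis: "ip (axis i 1) F J = (if i \<in> J then 0 else sgn_pair {i} J * F (insert i J))"
proof -
  have "ip (axis i 1) F J = (\<Sum>k\<in>UNIV - J. if k = i then sgn_pair {k} J * F (insert k J) else 0)"
    unfolding ip_def by (rule sum.cong) (auto simp: axis_def)
  then show ?thesis by (simp add: sum.delta)
qed

lemma ip_UNIV_minus: "ip x F (UNIV - {k}) = sgn_pair {k} (UNIV - {k}) * vec_nth x k * F UNIV"
proof -
  have "UNIV - (UNIV - {k}) = {k}" by auto
  moreover have "insert k (UNIV - {k}) = UNIV" by auto
  ultimately show ?thesis by (simp add: ip_def)
qed

lemma sgn_ne0: "sgn_pair I J \<noteq> 0" by (simp add: sgn_pair_def)
lemma sgn_sq: "sgn_pair I J * sgn_pair I J = 1" by (simp add: sgn_pair_def flip: power_mult_distrib)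

lemma volp_UNIV: "volp UNIV = 1" by (simp add: volp_def)

lemma leib_at:
  fixes a b :: "4 cform"
  assumes ha: "holo_form 1 V a" and hb: "holo_form 1 V b" and V: "open V" "z \<in> V"
    and eq: "\<forall>w\<in>V. \<eta> w = wedge a b w"
  shows "ext_d \<eta> z = (\<lambda>K. pw (ext_d a z) (b z) K - pw (a z) (ext_d b z) K)"
proof -
  have "ext_d \<eta> z = dpt (\<lambda>k I. pderiv_c k (\<lambda>w. pw (a w) (b w) I) z)"
    unfolding ext_d_dpt
  proof (rule arg_cong[where f=dpt], intro ext)
    fix k I
    show "pderiv_c k (\<lambda>w. \<eta> w I) z = pderiv_c k (\<lambda>w. pw (a w) (b w) I) z"
      by (rule pderiv_cong[OF V]) (use eq in \<open>simp add: wedge_pw\<close>)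
  qed
  also have "\<dots> = dpt (\<lambda>k J. pw (\<lambda>I. pderiv_c k (\<lambda>w. a w I) z) (b z) J + pw (a z) (\<lambda>I. pderiv_c k (\<lambda>w. b w I) z) J)"
  proof (rule arg_cong[where f=dpt], intro ext)
    fix k J
    show "pderiv_c k (\<lambda>w. pw (a w) (b w) J) z = pw (\<lambda>I. pderiv_c k (\<lambda>w. a w I) z) (b z) J + pw (a z) (\<lambda>I. pderiv_c k (\<lambda>w. b w I) z) J"
      by (rule pderiv_pw) (auto intro!: holo_pdiff[OF holo_form_holo[OF _ V(1)] V(2)] ha hb)
  qed
  also have "\<dots> = (\<lambda>K. pw (dpt (\<lambda>k I. pderiv_c k (\<lambda>w. a w I) z)) (b z) K - pw (a z) (dpt (\<lambda>k I. pderiv_c k (\<lambda>w. b w I) z)) K)"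
  proof (intro ext Bleib)
    show "dg 1 (a z)" "dg 1 (b z)" using hf_dg ha hb V by blast+
    show "\<And>k. dg 1 (\<lambda>I. pderiv_c k (\<lambda>w. a w I) z)" "\<And>k. dg 1 (\<lambda>I. pderiv_c k (\<lambda>w. b w I) z)"
      using hf_pderiv_dg ha hb V by blast+
  qed
  finally show ?thesis by (simp add: ext_d_dpt)
qed

lemma key_at:
  fixes a b :: "4 cform"
  assumes ha: "holo_form 1 V a" and hb: "holo_form 1 V b" and V: "open V" "z \<in> V"
    and eq: "\<forall>w\<in>V. \<eta> w = wedge a b w" and dX: "ext_d \<eta> z = ip x volp"
  shows "pw (ext_d a z) (\<eta> z) UNIV = ip x (a z) {}" "pw (ext_d b z) (\<eta> z) UNIV = ip x (b z) {}"
proof -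
  have L: "(\<lambda>K. pw (ext_d a z) (b z) K - pw (a z) (ext_d b z) K) = ip x volp"
    using leib_at[OF ha hb V eq] dX by simp
  have dga: "dg 1 (a z)" "dg 1 (b z)" using hf_dg ha hb V by blast+
  have "dg (Suc 1) (ext_d a z)" "dg (Suc 1) (ext_d b z)"
    unfolding ext_d_dpt by (rule dg_dpt, rule hf_pderiv_dg[OF ha V], rule dg_dpt, rule hf_pderiv_dg[OF hb V])
  then have dgG: "dg 2 (ext_d a z)" "dg 2 (ext_d b z)" by (simp_all add: numeral_2_eq_2)
  have ez: "\<eta> z = pw (a z) (b z)" using eq V by (simp add: wedge_pw)
  show "pw (ext_d a z) (\<eta> z) UNIV = ip x (a z) {}"
    using B3a[OF dgG(1) dgG(2) dga(1) dga(2)] B4[OF dga(1), of x] unfolding ez univ4 L by simp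
  show "pw (ext_d b z) (\<eta> z) UNIV = ip x (b z) {}"
    using B3b[OF dgG(1) dgG(2) dga(1) dga(2)] B4[OF dga(2), of x] unfolding ez univ4 L by simp
qed


lemma holo_ip:
  fixes \<eta> :: "4 cform"
  assumes "holo_form 2 U \<eta>" "open U"
  shows "holo_on U (\<lambda>z. ip v (\<eta> z) J)"
  unfolding ip_def
  by (intro holo_on_sum holo_on_cmult holo_form_holo[OF assms]) auto

lemma holo_PL:
  fixes \<eta> :: "4 cform"
  assumes "holo_form 2 U \<eta>" "open U"
  shows "holo_on U (\<lambda>z. pw (\<eta> z) (\<eta> z) K)"
  unfolding pw_def
  by (intro holo_on_sum holo_on_mult holo_on_cmult holo_form_holo[OF assms]) auto

lemma ext_d_cont:
  fixes \<eta> :: "4 cform"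
  assumes "holo_form 2 U \<eta>" "open U"
  shows "continuous_on U (\<lambda>z. ext_d \<eta> z J)"
  unfolding ext_d_def
  using assms(2) by (intro continuous_intros pderiv_continuous holo_form_holo[OF assms]) auto


theorem proposition2:
  fixes U :: "(complex^4) set" and \<eta> :: "4 cform" and X :: "4 cvfield"
  assumes "open U" and "connected U" and "U \<noteq> {}"
    and "holo_form 2 U \<eta>"
    and "\<exists>z\<in>U. \<eta> z \<noteq> (\<lambda>_. 0)"
    and "\<forall>z\<in>U. ext_d \<eta> z = interior_prod X vol_form z"
    and "\<exists>z\<in>U. X z \<noteq> 0"
  shows "integrable_form 2 U \<eta> \<longleftrightarrow> (\<forall>z\<in>U. interior_prod X \<eta> z = (\<lambda>_. 0))"
proof -
  note hol = assms(4)
  have dgE: "\<And>z. z \<in> U \<Longrightarrow> dg 2 (\<eta> z)" using hf_dg[OF hol] .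
  have dX: "\<And>z. z \<in> U \<Longrightarrow> ext_d \<eta> z = ip (X z) volp" using assms(6) by (simp add: interior_ip vol_volp)
  show ?thesis
  proof
    assume int: "integrable_form 2 U \<eta>"
    show "\<forall>z\<in>U. interior_prod X \<eta> z = (\<lambda>_. 0)"
    proof
      fix z assume z: "z \<in> U"
      show "interior_prod X \<eta> z = (\<lambda>_. 0)"
      proof (cases "z \<in> Sing U \<eta>")
        case True then have "\<eta> z = (\<lambda>_. 0)" by (simp add: Sing_def)
        then have "ip (X z) (\<eta> z) = ip (X z) (\<lambda>_. 0)" by (rule arg_cong)
        then show ?thesis by (simp add: interior_ip ip_zero fun_eq_iff)
      next
        case False
        with int z obtain V ws where V: "open V" "z \<in> V" "V \<subseteq> U" "length ws = 2"
          "\<forall>\<omega>\<in>set ws. holo_form 1 V \<omega>" "\<forall>w\<in>V. \<eta> w = wedge_list ws w"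
          "\<forall>\<omega>\<in>set ws. \<forall>w\<in>V. wedge (ext_d \<omega>) \<eta> w = (\<lambda>_. 0)"
        proof -
          have "z \<in> U - Sing U \<eta>" using z False by simp
          then show ?thesis using int that unfolding integrable_form_def by metis
        qed
        obtain a b where ws: "ws = [a, b]" using V(4)
          by (auto simp: numeral_2_eq_2 length_Suc_conv)
        have ha: "holo_form 1 V a" "holo_form 1 V b" using V(5) ws by auto
        have eq: "\<forall>w\<in>V. \<eta> w = wedge a b w" using V(6) ws by (simp add: wedge_list2)
        have k: "pw (ext_d a z) (\<eta> z) UNIV = ip (X z) (a z) {}" "pw (ext_d b z) (\<eta> z) UNIV = ip (X z) (b z) {}"
          using key_at[OF ha V(1) V(2) eq dX[OF z]] by auto
        have "wedge (ext_d a) \<eta> z UNIV = 0" "wedge (ext_d b) \<eta> z UNIV = 0"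
          using V(7) V(2) ws by auto
        then have xa: "ip (X z) (a z) {} = 0" "ip (X z) (b z) {} = 0" using k by (auto simp: wedge_pw)
        have dga: "dg 1 (a z)" "dg 1 (b z)" using hf_dg ha V by blast+
        have ez: "\<eta> z = pw (a z) (b z)" using eq V by (simp add: wedge_pw)
        show ?thesis unfolding interior_ip ez
          using B6[OF dga, of "X z"] xa by (simp add: fun_eq_iff)
      qed
    qed
  next
    assume iX: "\<forall>z\<in>U. interior_prod X \<eta> z = (\<lambda>_. 0)"
    have iX': "\<And>z. z \<in> U \<Longrightarrow> ip (X z) (\<eta> z) = (\<lambda>_. 0)" using iX by (simp add: interior_ip)
    define PL where "PL z = pw (\<eta> z) (\<eta> z) UNIV" for z
    have PLk: "vec_nth (X z) k * PL z = 0" if z: "z \<in> U" for z k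
    proof -
      have "ip (X z) (pw (\<eta> z) (\<eta> z)) (UNIV - {k}) = 2 * pw (ip (X z) (\<eta> z)) (\<eta> z) (UNIV - {k})"
        by (rule B7[OF dgE[OF z]])
      also have "\<dots> = 0" using iX'[OF z] by (simp add: pw_zero)
      finally show ?thesis using sgn_ne0[of "{k}" "UNIV - {k}"] by (simp add: PL_def ip_UNIV_minus)
    qed
    have Xk: "vec_nth (X z) k = sgn_pair {k} (UNIV - {k}) * ext_d \<eta> z (UNIV - {k})" if z: "z \<in> U" for z k
    proof -
      have "ext_d \<eta> z (UNIV - {k}) = sgn_pair {k} (UNIV - {k}) * vec_nth (X z) k"
        using dX[OF z] by (simp add: ip_UNIV_minus volp_UNIV)
      then have "sgn_pair {k} (UNIV - {k}) * ext_d \<eta> z (UNIV - {k}) = (sgn_pair {k} (UNIV - {k}) * sgn_pair {k} (UNIV - {k})) * vec_nth (X z) k"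
        by (simp add: algebra_simps)
      then show ?thesis by (simp add: sgn_sq)
    qed
    have Xk_cont: "continuous_on U (\<lambda>z. vec_nth (X z) k)" for k
    proof -
      have "continuous_on U (\<lambda>z. sgn_pair {k} (UNIV - {k}) * ext_d \<eta> z (UNIV - {k}))"
        by (intro continuous_intros ext_d_cont[OF hol assms(1)])
      then show ?thesis by (rule continuous_on_eq) (simp add: Xk)
    qed
    obtain z0 where z0: "z0 \<in> U" "X z0 \<noteq> 0" using assms(7) by blast
    then obtain k where k: "vec_nth (X z0) k \<noteq> 0" by (metis vec_eq_iff zero_index)
    define W where "W = U \<inter> (\<lambda>z. vec_nth (X z) k) -` (- {0})"
    have openW: "open W"
      using continuous_on_open_vimage[OF assms(1), THEN iffD1, OF Xk_cont[of k], rule_format, of "- {0}"]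
      by (simp add: W_def Int_commute open_Compl)
    have PL0: "PL z = 0" if z: "z \<in> U" for z
    proof (rule holo_identity[where g = PL])
      show "holo_on U PL" unfolding PL_def by (rule holo_PL[OF hol assms(1)])
      show "open W" "W \<subseteq> U" "z0 \<in> W" using openW z0 k by (auto simp: W_def)
      show "\<And>w. w \<in> W \<Longrightarrow> PL w = 0" using PLk by (auto simp: W_def)
    qed (use assms z in auto)
    show "integrable_form 2 U \<eta>"
      unfolding integrable_form_def
    proof
      fix p assume p: "p \<in> U - Sing U \<eta>"
      then have pU: "p \<in> U" and "\<eta> p \<noteq> (\<lambda>_. 0)" by (auto simp: Sing_def)
      then obtain I where I: "\<eta> p I \<noteq> 0" by auto
      with dgE[OF pU] have "card I = 2" by (auto simp: dg_def)
      then obtain i j where ij: "I = {i, j}" "i \<noteq> j" by (auto simp: card_2_iff)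
      define s where "s = sgn_pair {j} {} * sgn_pair {i} {j}"
      define v where "v = axis i (1::complex)"
      define w where "w = axis j (1::complex)"
      define c where "c z = s * \<eta> z {i, j}" for z
      have cz: "ip w (ip v E) {} = s * E {i, j}" for E :: "4 set \<Rightarrow> complex"
        using ij(2) by (simp add: v_def w_def s_def ip_axis)
      have s0: "s \<noteq> 0" by (simp add: s_def sgn_ne0)
      have holc: "holo_on U c" unfolding c_def by (intro holo_on_cmult holo_form_holo[OF hol assms(1)])
      define V where "V = U \<inter> c -` (- {0})"
      have openV: "open V"
        using continuous_on_open_vimage[OF assms(1), THEN iffD1, OF holo_on_continuous[OF holc], rule_format, of "- {0}"]
        by (simp add: V_def Int_commute open_Compl)
      have pV: "p \<in> V" using pU I ij s0 by (simp add: V_def c_def)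
      have VU: "V \<subseteq> U" by (auto simp: V_def)
      have cV: "\<And>z. z \<in> V \<Longrightarrow> c z \<noteq> 0" by (auto simp: V_def)
      define a where "a z K = ip v (\<eta> z) K / c z" for z K
      define b where "b z K = ip w (\<eta> z) K" for z K
      have dgv: "dg 1 (ip u (\<eta> z))" if "z \<in> U" for u z
      proof -
        have "dg (Suc 1) (\<eta> z)" using dgE[OF that] by (simp add: numeral_2_eq_2)
        then show ?thesis by (rule dg_ip)
      qed
      have ha: "holo_form 1 V a"
        unfolding holo_form_def
      proof (intro conjI allI impI ballI)
        fix K :: "4 set"
        show "holo_on V (\<lambda>z. a z K)" unfolding a_def
          by (intro holo_on_divide holo_on_subset[OF holc VU] holo_on_subset[OF holo_ip[OF hol assms(1)] VU] cV)
      next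
        fix K :: "4 set" and z assume "card K \<noteq> 1" "z \<in> V"
        then show "a z K = 0" using dgv[of z v] VU by (auto simp: a_def dg_def)
      qed
      have hb: "holo_form 1 V b"
        unfolding holo_form_def
      proof (intro conjI allI impI ballI)
        fix K :: "4 set"
        show "holo_on V (\<lambda>z. b z K)" unfolding b_def
          by (intro holo_on_subset[OF holo_ip[OF hol assms(1)] VU])
      next
        fix K :: "4 set" and z assume "card K \<noteq> 1" "z \<in> V"
        then show "b z K = 0" using dgv[of z w] VU by (auto simp: b_def dg_def)
      qed
      have dec: "\<forall>z\<in>V. \<eta> z = wedge a b z"
      proof
        fix z assume z: "z \<in> V"
        then have zU: "z \<in> U" using VU by auto
        have PLz: "pw (\<eta> z) (\<eta> z) {0,1,2,3} = 0" using PL0[OF zU] by (simp add: PL_def univ4)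
        show "\<eta> z = wedge a b z"
        proof
          fix K
          have az: "a z = (\<lambda>K. ip v (\<eta> z) K / c z)" "b z = ip w (\<eta> z)" by (simp_all add: a_def b_def fun_eq_iff)
          have "wedge a b z K = pw (ip v (\<eta> z)) (ip w (\<eta> z)) K / c z"
            unfolding wedge_pw az by (rule pw_div)
          also have "\<dots> = (ip w (ip v (\<eta> z)) {} * \<eta> z K) / c z"
            using Bdec[OF dgE[OF zU] PLz] by simp
          also have "\<dots> = \<eta> z K" using cz cV[OF z] by (simp add: c_def)
          finally show "\<eta> z K = wedge a b z K" by simp
        qed
      qed
      have dgE4: "dg 4 (pw (ext_d \<omega> z) (\<eta> z))" if "holo_form 1 V \<omega>" "z \<in> V" for \<omega> z
      proof -
        have "dg (Suc 1) (ext_d \<omega> z)"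
          unfolding ext_d_dpt by (rule dg_dpt, rule hf_pderiv_dg[OF that(1) openV that(2)])
        then have "dg 2 (ext_d \<omega> z)" by (simp add: numeral_2_eq_2)
        from dg_pw[OF this dgE, of z] that VU show ?thesis by auto
      qed
      have cardU: "card K = 4 \<Longrightarrow> K = (UNIV :: 4 set)" for K
        using card_subset_eq[of "UNIV::4 set" K] by auto
      have int_a: "\<forall>z\<in>V. wedge (ext_d a) \<eta> z = (\<lambda>_. 0)" and int_b: "\<forall>z\<in>V. wedge (ext_d b) \<eta> z = (\<lambda>_. 0)"
      proof -
        { fix z assume z: "z \<in> V"
          then have zU: "z \<in> U" using VU by auto
          have k: "pw (ext_d a z) (\<eta> z) UNIV = ip (X z) (a z) {}" "pw (ext_d b z) (\<eta> z) UNIV = ip (X z) (b z) {}"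
            using key_at[OF ha hb openV z dec dX[OF zU]] by auto
          have az: "a z = (\<lambda>K. ip v (\<eta> z) K / c z)" by (simp add: a_def fun_eq_iff)
          have "ip (X z) (a z) {} = ip (X z) (ip v (\<eta> z)) {} / c z"
            unfolding az by (rule ip_div)
          also have "\<dots> = - ip v (ip (X z) (\<eta> z)) {} / c z" using B5[OF dgE[OF zU], where x="X z" and v=v] by simp
          also have "\<dots> = 0" unfolding iX'[OF zU] by (simp add: ip_zero)
          finally have xa: "ip (X z) (a z) {} = 0" .
          have bz: "b z = ip w (\<eta> z)" by (simp add: b_def fun_eq_iff)
          have "ip (X z) (b z) {} = ip (X z) (ip w (\<eta> z)) {}"
            unfolding bz ..
          also have "\<dots> = - ip w (ip (X z) (\<eta> z)) {}" using B5[OF dgE[OF zU], where x="X z" and v=w] by simp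
          also have "\<dots> = 0" unfolding iX'[OF zU] by (simp add: ip_zero)
          finally have xb: "ip (X z) (b z) {} = 0" .
          have "wedge (ext_d a) \<eta> z = (\<lambda>_. 0)" "wedge (ext_d b) \<eta> z = (\<lambda>_. 0)"
          proof -
            show "wedge (ext_d a) \<eta> z = (\<lambda>_. 0)"
            proof
              fix K show "wedge (ext_d a) \<eta> z K = 0"
              proof (cases "card K = 4")
                case True then have "K = UNIV" by (rule cardU)
                then show ?thesis using k xa by (simp add: wedge_pw)
              next
                case False then show ?thesis using dgE4[OF ha z] by (simp add: wedge_pw dg_def)
              qed
            qed
            show "wedge (ext_d b) \<eta> z = (\<lambda>_. 0)"
            proof
              fix K show "wedge (ext_d b) \<eta> z K = 0"
              proof (cases "card K = 4")
                case True then have "K = UNIV" by (rule cardU)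
                then show ?thesis using k xb by (simp add: wedge_pw)
              next
                case False then show ?thesis using dgE4[OF hb z] by (simp add: wedge_pw dg_def)
              qed
            qed
          qed }
        then show "\<forall>z\<in>V. wedge (ext_d a) \<eta> z = (\<lambda>_. 0)" "\<forall>z\<in>V. wedge (ext_d b) \<eta> z = (\<lambda>_. 0)" by auto
      qed
      show "\<exists>V. open V \<and> p \<in> V \<and> V \<subseteq> U \<and>
        (\<exists>ws. length ws = 2 \<and> (\<forall>\<omega>\<in>set ws. holo_form 1 V \<omega>) \<and>
              (\<forall>z\<in>V. \<eta> z = wedge_list ws z) \<and>
              (\<forall>\<omega>\<in>set ws. \<forall>z\<in>V. wedge (ext_d \<omega>) \<eta> z = (\<lambda>_. 0)))"
      proof (intro exI[of _ V] conjI exI[of _ "[a, b]"])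
        show "open V" "p \<in> V" "V \<subseteq> U" by (fact openV, fact pV, fact VU)
        show "length [a, b] = 2" by simp
        show "\<forall>\<omega>\<in>set [a, b]. holo_form 1 V \<omega>" using ha hb by simp
        show "\<forall>z\<in>V. \<eta> z = wedge_list [a, b] z" using dec by (simp add: wedge_list2)
        show "\<forall>\<omega>\<in>set [a, b]. \<forall>z\<in>V. wedge (ext_d \<omega>) \<eta> z = (\<lambda>_. 0)" using int_a int_b by simp
      qed
    qed
  qed
qed


end
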